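(* Fix $N\ge 1$ and $\Delta t>0$. Let $\mathbf{b}_n,\mathbf{b}_{n+1}\in\mathbb{C}^N$ with components $b_{j,n},b_{j,n+1}$, with the convention $b_{0,m}=b_{N+1,m}=0$ for $m\in\{n,n+1\}$, and suppose that $\mathbf{b}_{n+1}$ is an exact solution of the system $$b_{j,n+1}=b_{j,n}+\Delta t\Big(-i\,|b|^2_{j,n+1/2}\,b_{j,n+1/2}+2i\,\overline{b_{j,n+1/2}}\,\big(b_{j+1,n+1/2}^2+b_{j-1,n+1/2}^2\big)\Big),\qquad j=1,\dots,N,$$ where $b_{j,n+1/2}=\tfrac12(b_{j,n}+b_{j,n+1})$ and $|b|^2_{j,n+1/2}=\tfrac12\big(|b_{j,n}|^2+|b_{j,n+1}|^2\big)$. Then $\sum_{j=1}^N|b_{j,n+1}|^2=\sum_{j=1}^N|b_{j,n}|^2$.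
   Context: This is a "modified midpoint" discretization of the toy model system $-i\dot b_j=-|b_j|^2b_j+2b_{j-1}^2\bar b_j+2b_{j+1}^2\bar b_j$, $j=1,\dots,N$, with $b_0=b_{N+1}=0$; the conserved quantity is the mass $\mathcal{M}[\mathbf{b}]=\sum_j|b_j|^2$. *)

theory Defs
  imports Complex_Main
begin

text \<open>A vector in C^N is represented by a function nat => complex whose relevant
components are indices 1..N. The boundary convention b_0 = b_(N+1) = 0 is realised
by the zero extension below (components outside 1..N are set to 0).\<close>

definition ext :: "nat \<Rightarrow> (nat \<Rightarrow> complex) \<Rightarrow> nat \<Rightarrow> complex" where
  "ext N b j = (if 1 \<le> j \<and> j \<le> N then b j else 0)"

definition mm_step :: "nat \<Rightarrow> real \<Rightarrow> (nat \<Rightarrow> complex) \<Rightarrow> (nat \<Rightarrow> complex) \<Rightarrow> nat \<Rightarrow> bool" where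
  "mm_step N dt b b' j \<longleftrightarrow>
     (let h = (\<lambda>k. (ext N b k + ext N b' k) / 2);
          m2 = (cmod (b j))\<^sup>2 / 2 + (cmod (b' j))\<^sup>2 / 2
      in b' j = b j + complex_of_real dt *
           (- \<i> * complex_of_real m2 * h j
            + 2 * \<i> * cnj (h j) * ((h (j + 1))\<^sup>2 + (h (j - 1))\<^sup>2)))"

end

theory Submission
  imports Defs
begin

lemma key:
  fixes x y p q :: complex and dt m :: real
  assumes "y = x + complex_of_real dt * (- \<i> * complex_of_real m * ((x+y)/2) + 2 * \<i> * cnj ((x+y)/2) * (p\<^sup>2 + q\<^sup>2))"
  shows "(cmod y)\<^sup>2 - (cmod x)\<^sup>2 = -4*dt*(Im (cnj (((x+y)/2)\<^sup>2) * p\<^sup>2) - Im (cnj (q\<^sup>2) * ((x+y)/2)\<^sup>2))"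
proof -
  define h where "h = (x+y)/2"
  have e: "y - x = complex_of_real dt * (- \<i> * complex_of_real m * h + 2 * \<i> * cnj h * (p\<^sup>2 + q\<^sup>2))"
    using assms unfolding h_def by (metis add_diff_cancel_left')
  have "(cmod y)\<^sup>2 - (cmod x)\<^sup>2 = 2 * Re ((y - x) * cnj h)"
    unfolding h_def cmod_power2 by (simp add: algebra_simps power2_eq_square)
  also have "\<dots> = -4*dt*(Im (cnj (h\<^sup>2) * p\<^sup>2) - Im (cnj (q\<^sup>2) * h\<^sup>2))"
    unfolding e by (simp add: algebra_simps power2_eq_square)
  finally show ?thesis unfolding h_def .
qed

theorem proposition2p2:
  fixes N :: nat and dt :: real and b b' :: "nat \<Rightarrow> complex"
  assumes "N \<ge> 1" and "dt > 0"
    and "\<And>j. 1 \<le> j \<Longrightarrow> j \<le> N \<Longrightarrow> mm_step N dt b b' j"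
  shows "(\<Sum>j=1..N. (cmod (b' j))\<^sup>2) = (\<Sum>j=1..N. (cmod (b j))\<^sup>2)"
proof -
  define h where "h = (\<lambda>k. (ext N b k + ext N b' k) / 2)"
  define A where "A = (\<lambda>k. Im (cnj ((h k)\<^sup>2) * (h (Suc k))\<^sup>2))"
  have hj: "h j = (b j + b' j)/2" if "1 \<le> j" "j \<le> N" for j
    using that unfolding h_def ext_def by simp
  have step: "(cmod (b' j))\<^sup>2 - (cmod (b j))\<^sup>2 = -4*dt*(A j - A (j - 1))"
    if j: "1 \<le> j" "j \<le> N" for j
  proof -
    have m: "b' j = b j + complex_of_real dt * (- \<i> * complex_of_real ((cmod (b j))\<^sup>2 / 2 + (cmod (b' j))\<^sup>2 / 2) * ((b j + b' j)/2)
            + 2 * \<i> * cnj ((b j + b' j)/2) * ((h (j + 1))\<^sup>2 + (h (j - 1))\<^sup>2))"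
      using assms(3)[OF j] hj[OF j] unfolding mm_step_def h_def Let_def by simp
    have "Suc (j - 1) = j" using j by simp
    then have "A (j - 1) = Im (cnj ((h (j-1))\<^sup>2) * (h j)\<^sup>2)" unfolding A_def by simp
    moreover have "A j = Im (cnj ((h j)\<^sup>2) * (h (j+1))\<^sup>2)" unfolding A_def by simp
    moreover note key[OF m]
    ultimately show ?thesis unfolding hj[OF j, symmetric] by simp
  qed
  have "(\<Sum>j=1..N. (cmod (b' j))\<^sup>2) - (\<Sum>j=1..N. (cmod (b j))\<^sup>2)
      = (\<Sum>j=1..N. -4*dt*(A j - A (j - 1)))"
    by (simp add: sum_subtractf[symmetric] step)
  also have "\<dots> = -4*dt*(\<Sum>j=1..N. (A j - A (j - 1)))"
    by (simp add: sum_distrib_left)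
  also have "(\<Sum>j=1..N. (A j - A (j - 1))) = A N - A 0"
    using assms(1) by (induction N rule: dec_induct) (simp_all)
  also have "A N = 0" unfolding A_def h_def ext_def by simp
  also have "A 0 = 0" unfolding A_def h_def ext_def by simp
  finally show ?thesis by simp
qed

end
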